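(* Let $p,q,p',q'\in(0,1/2)$, suppose $K_{pq}$ and $K_{p'q'}$ are twofold Cantor sets, and let $f:K_{pq}\to K_{p'q'}$ be a homeomorphism with $f(S_i(x))=S_i'(f(x))$ for all $x\in K_{pq}$ and $i\in\{1,2,3,4\}$. Then $f$ extends to a homeomorphism $\tilde f:\mathbb C\to\mathbb C$. Moreover, if some such extension $\tilde f$ satisfies $\tilde f\circ S_i(z)=S_i'\circ\tilde f(z)$ for all $z\in\mathbb C$ and all $i\in\{1,2,3,4\}$, then $(p,q)=(p',q')$.
   Context: For $p,q\in(0,1/2)$ let $S_1(z)=pz$, $S_2(z)=qz$, $S_3(z)=pz+1-p$, $S_4(z)=qz+1-q$ (maps of $\mathbb R$, also regarded as maps of $\mathbb C$ by the same formulas), let $K_{pq}\subset\mathbb R\subset\mathbb C$ be the attractor of $\{S_1,S_2,S_3,S_4\}$ (the unique nonempty compact $K$ with $K=\bigcup_{i=1}^4S_i(K)$), and let $A=S_3(K_{pq})\cup S_4(K_{pq})$. $K_{pq}$ is called a twofold Cantor set if $S_1^m(A)\cap S_2^n(A)=\varnothing$ for all $m,n\in\mathbb N$. The maps $S_i'$ are defined in the same way with $p',q'$ in place of $p,q$. *)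

theory Defs
  imports "HOL-Analysis.Analysis"
begin

definition IFSmap :: "real \<Rightarrow> real \<Rightarrow> nat \<Rightarrow> 'a::real_algebra_1 \<Rightarrow> 'a" where
  "IFSmap p q i z =
     (if i = 1 then of_real p * z
      else if i = 2 then of_real q * z
      else if i = 3 then of_real p * z + of_real (1 - p)
      else of_real q * z + of_real (1 - q))"

definition attractor :: "real \<Rightarrow> real \<Rightarrow> real set" where
  "attractor p q = (THE K. K \<noteq> {} \<and> compact K \<and>
      K = (\<Union>i\<in>{1..4::nat}. IFSmap p q i ` K))"

definition twofold_Cantor :: "real \<Rightarrow> real \<Rightarrow> bool" where
  "twofold_Cantor p q \<longleftrightarrow>
     (let K = attractor p q;
          A = IFSmap p q 3 ` K \<union> IFSmap p q 4 ` K
      in \<forall>m n::nat. m \<ge> 1 \<longrightarrow> n \<ge> 1 \<longrightarrow>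
           (IFSmap p q 1 ^^ m) ` A \<inter> (IFSmap p q 2 ^^ n) ` A = {})"

end

theory Submission
  imports Defs
begin

lemma IFS_real: "IFSmap p q i (x::real) = (if i = 1 then p*x else if i = 2 then q*x else if i = 3 then p*x + (1-p) else q*x+(1-q))"
  by (simp add: IFSmap_def)

inductive_set orb :: "real \<Rightarrow> real \<Rightarrow> real set" for p q where
  orb0: "0 \<in> orb p q"
| orbS: "x \<in> orb p q \<Longrightarrow> i \<in> {1..4::nat} \<Longrightarrow> IFSmap p q i x \<in> orb p q"

lemma IFS_contr:
  assumes "0 < p" "p < 1/2" "0 < q" "q < 1/2"
  shows "\<bar>IFSmap p q i x - IFSmap p q i (y::real)\<bar> \<le> \<bar>x - y\<bar> / 2"
proof -
  have "\<bar>c*x - c*y\<bar> \<le> \<bar>x - y\<bar> / 2" if "0<c" "c<1/2" for c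
  proof -
    have "\<bar>c*x - c*y\<bar> = c * \<bar>x-y\<bar>" using that by (simp add: abs_mult right_diff_distrib[symmetric])
    also have "\<dots> \<le> \<bar>x - y\<bar> / 2"
    proof -
      have "(c*2)*\<bar>x-y\<bar> \<le> 1*\<bar>x-y\<bar>" by (rule mult_right_mono) (use that in auto)
      then show ?thesis by simp
    qed
    finally show ?thesis .
  qed
  then show ?thesis using assms by (auto simp: IFS_real)
qed

lemma IFS_01:
  assumes "0 < p" "p < 1/2" "0 < q" "q < 1/2" "0 \<le> x" "x \<le> (1::real)"
  shows "0 \<le> IFSmap p q i x \<and> IFSmap p q i x \<le> 1"
  using assms by (auto simp: IFS_real mult_le_one)

lemma orb_01:
  assumes "0 < p" "p < 1/2" "0 < q" "q < 1/2"
  shows "orb p q \<subseteq> {0..1}"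
proof
  fix x assume "x \<in> orb p q" then show "x \<in> {0..1}"
    by induction (use IFS_01[OF assms] in auto)
qed

lemma approx_lemma:
  assumes "\<And>n. \<exists>w\<in>S. \<bar>y - w\<bar> \<le> B * (1/2)^n" 
  shows "y \<in> closure (S::real set)"
proof (subst closure_approachable, intro allI impI)
  fix e :: real assume e: "e > 0"
  show "\<exists>x\<in>S. dist x y < e"
  proof (cases "B \<le> 0")
    case True
    then obtain w where "w \<in> S" "\<bar>y - w\<bar> \<le> B * (1/2)^0" using assms by blast
    then show ?thesis using True e by (intro bexI[of _ w]) (auto simp: dist_real_def)
  next
    case False
    obtain n where n: "(1/2::real)^n < e / B" using real_arch_pow_inv[of "e/B" "1/2"] e False by auto
    obtain w where "w \<in> S" "\<bar>y - w\<bar> \<le> B * (1/2)^n" using assms by blast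
    moreover have "B * (1/2)^n < e" using n False by (simp add: field_simps)
    ultimately show ?thesis by (intro bexI[of _ w]) (auto simp: dist_real_def)
  qed
qed

lemma inv_sub:
  assumes "K = (\<Union>i\<in>{1..4::nat}. IFSmap p q i ` K)" "x \<in> K" "i \<in> {1..4}"
  shows "IFSmap p q i x \<in> K"
  using assms by blast

lemma unique_att:
  assumes pq: "0 < p" "p < 1/2" "0 < q" "q < 1/2"
    and K: "K \<noteq> {}" "compact K" "K = (\<Union>i\<in>{1..4::nat}. IFSmap p q i ` K)"
  shows "K = closure (orb p q)"
proof -
  obtain B where B: "\<And>x. x \<in> K \<Longrightarrow> \<bar>x\<bar> \<le> B"
    using compact_imp_bounded[OF K(2)] by (auto simp: bounded_real)
  obtain x0 where x0: "x0 \<in> K" using K(1) by blast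
  have "\<exists>y\<in>K. \<bar>0 - y\<bar> \<le> B * (1/2)^n" for n
  proof (induction n)
    case 0 then show ?case using x0 B by auto
  next
    case (Suc n)
    then obtain y where y: "y \<in> K" "\<bar>0 - y\<bar> \<le> B * (1/2)^n" by blast
    have "IFSmap p q 1 y \<in> K" using inv_sub[OF K(3) y(1)] by auto
    moreover have "\<bar>0 - IFSmap p q 1 y\<bar> \<le> B * (1/2)^Suc n"
      using IFS_contr[OF pq, of 1 0 y] y(2) by (simp add: IFS_real)
    ultimately show ?case by blast
  qed
  then have "0 \<in> closure K" by (rule approx_lemma)
  then have "0 \<in> K" using K(2) by (simp add: compact_imp_closed)
  have sub: "orb p q \<subseteq> K"
  proof
    fix x assume "x \<in> orb p q" then show "x \<in> K"
      by induction (use \<open>0 \<in> K\<close> inv_sub[OF K(3)] in auto)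
  qed
  have ap: "\<exists>w\<in>orb p q. \<bar>y - w\<bar> \<le> B * (1/2)^n" if "y \<in> K" for y n
    using that
  proof (induction n arbitrary: y)
    case 0 then show ?case using B orb0 by force
  next
    case (Suc n)
    from Suc.prems K(3) obtain i z where iz: "i \<in> {1..4}" "z \<in> K" "y = IFSmap p q i z" by blast
    obtain w where w: "w \<in> orb p q" "\<bar>z - w\<bar> \<le> B * (1/2)^n" using Suc.IH[OF iz(2)] by blast
    have "IFSmap p q i w \<in> orb p q" using w(1) iz(1) by (rule orbS)
    moreover have "\<bar>y - IFSmap p q i w\<bar> \<le> B * (1/2)^Suc n"
      using IFS_contr[OF pq, of i z w] w(2) iz(3) by simp
    ultimately show ?case by blast
  qed
  have "K \<subseteq> closure (orb p q)"
  proof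
    fix y assume y: "y \<in> K"
    show "y \<in> closure (orb p q)" by (rule approx_lemma) (rule ap[OF y])
  qed
  moreover have "closure (orb p q) \<subseteq> K" using sub K(2) by (simp add: closure_minimal compact_imp_closed)
  ultimately show ?thesis by blast
qed

lemma cont_IFS: "continuous_on A (IFSmap p q i :: real \<Rightarrow> real)"
  unfolding IFS_real by (cases "i=1"; cases "i=2"; cases "i=3") (auto intro!: continuous_intros)

lemma exists_att:
  assumes pq: "0 < p" "p < 1/2" "0 < q" "q < 1/2"
  defines "K \<equiv> closure (orb p q)"
  shows "K \<noteq> {} \<and> compact K \<and> K = (\<Union>i\<in>{1..4::nat}. IFSmap p q i ` K)"
proof -
  have bo: "bounded (orb p q)" by (rule bounded_subset[OF bounded_closed_interval orb_01[OF pq]])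
  have cK: "compact K" unfolding K_def compact_closure by (rule bo)
  have img: "IFSmap p q i ` K = closure (IFSmap p q i ` orb p q)" for i
  proof
    show "IFSmap p q i ` K \<subseteq> closure (IFSmap p q i ` orb p q)"
      unfolding K_def by (rule image_closure_subset[OF cont_IFS closed_closure closure_subset])
    have "compact (IFSmap p q i ` K)" using cK by (intro compact_continuous_image cont_IFS)
    show "closure (IFSmap p q i ` orb p q) \<subseteq> IFSmap p q i ` K"
    proof (rule closure_minimal)
      have "orb p q \<subseteq> K" unfolding K_def by (rule closure_subset)
      then show "IFSmap p q i ` orb p q \<subseteq> IFSmap p q i ` K" by (rule image_mono)
      show "closed (IFSmap p q i ` K)" using \<open>compact (IFSmap p q i ` K)\<close> by (rule compact_imp_closed)
    qed
  qed
  have U: "(\<Union>i\<in>{1..4::nat}. IFSmap p q i ` orb p q) = orb p q"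
  proof
    show "(\<Union>i\<in>{1..4::nat}. IFSmap p q i ` orb p q) \<subseteq> orb p q"
    proof (rule UN_least)
      fix i :: nat assume i: "i \<in> {1..4}"
      show "IFSmap p q i ` orb p q \<subseteq> orb p q" using orbS[OF _ i] by blast
    qed
    show "orb p q \<subseteq> (\<Union>i\<in>{1..4::nat}. IFSmap p q i ` orb p q)"
    proof
      fix x assume "x \<in> orb p q" then show "x \<in> (\<Union>i\<in>{1..4::nat}. IFSmap p q i ` orb p q)"
      proof cases
        case orb0
        have "IFSmap p q 1 0 = (0::real)" by (simp add: IFS_real)
        then have "x \<in> IFSmap p q 1 ` orb p q" using orb0 orb.orb0 by (metis image_eqI)
        moreover have "(1::nat) \<in> {1..4}" by simp
        ultimately show ?thesis by (rule UN_I[rotated])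
      next
        case (orbS y i) then show ?thesis by blast
      qed
    qed
  qed
  have "(\<Union>i\<in>{1..4::nat}. IFSmap p q i ` K) = (\<Union>i\<in>{1..4::nat}. closure (IFSmap p q i ` orb p q))"
    using img by simp
  also have "\<dots> = closure (\<Union>i\<in>{1..4::nat}. IFSmap p q i ` orb p q)"
  proof -
    have e: "{1..4::nat} = {1,2,3,4}" by auto
    show ?thesis unfolding e by simp
  qed
  also have "\<dots> = K" by (simp only: U K_def)
  finally have UK: "(\<Union>i\<in>{1..4::nat}. IFSmap p q i ` K) = K" .
  have Kne: "K \<noteq> {}"
  proof -
    have "0 \<in> orb p q" by (rule orb.orb0)
    then have "0 \<in> K" unfolding K_def using closure_subset[of "orb p q"] by blast
    then show ?thesis by auto
  qed
  show ?thesis using Kne cK UK[symmetric] by (intro conjI)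
qed

lemma attractor_closed:
  assumes pq: "0 < p" "p < 1/2" "0 < q" "q < 1/2"
  shows "closed (attractor p q)"
proof -
  have "\<exists>!K::real set. K \<noteq> {} \<and> compact K \<and> K = (\<Union>i\<in>{1..4::nat}. IFSmap p q i ` K)"
  proof (rule ex1I[where a="closure (orb p q)"])
    show "closure (orb p q) \<noteq> {} \<and> compact (closure (orb p q)) \<and>
      closure (orb p q) = (\<Union>i\<in>{1..4::nat}. IFSmap p q i ` closure (orb p q))"
      by (rule exists_att[OF pq])
    fix K :: "real set" assume "K \<noteq> {} \<and> compact K \<and> K = (\<Union>i\<in>{1..4::nat}. IFSmap p q i ` K)"
    then show "K = closure (orb p q)" using unique_att[OF pq] by (elim conjE)
  qed
  then have "(\<lambda>K::real set. K \<noteq> {} \<and> compact K \<and> K = (\<Union>i\<in>{1..4::nat}. IFSmap p q i ` K)) (attractor p q)"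
    unfolding attractor_def by (rule theI')
  then have "compact (attractor p q)" by simp
  then show ?thesis by (rule compact_imp_closed)
qed

lemma scale_le:
  fixes H :: "complex \<Rightarrow> complex"
  assumes p: "0 < p" "p < 1" and p': "0 < p'" "p' < 1"
    and cH: "continuous_on UNIV H"
    and h1: "\<And>z. H (of_real p * z) = of_real p' * H z"
    and h3: "\<And>z. H (of_real p * z + of_real (1 - p)) = of_real p' * H z + of_real (1 - p')"
  shows "p' \<le> p"
proof (rule ccontr)
  assume "\<not> p' \<le> p" then have lt: "p < p'" by simp
  have H0: "H 0 = 0"
  proof -
    have "H 0 = of_real p' * H 0" using h1[of 0] by simp
    then have "(1 - of_real p') * H 0 = 0" by (simp add: algebra_simps)
    moreover have "(1 - of_real p' :: complex) \<noteq> 0" using p' by (metis of_real_1 of_real_eq_iff right_minus_eq less_irrefl)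
    ultimately show ?thesis by simp
  qed
  have shift: "H (w + of_real (1 - p)) = H w + of_real (1 - p')" for w
  proof -
    have "w = of_real p * (w / of_real p)" using p by simp
    then have "H (w + of_real (1 - p)) = of_real p' * H (w / of_real p) + of_real (1 - p')"
      using h3[of "w / of_real p"] by metis
    also have "of_real p' * H (w / of_real p) = H w"
      using h1[of "w / of_real p"] \<open>w = _\<close> by metis
    finally show ?thesis .
  qed
  have Hn: "H (of_nat n * of_real (1 - p)) = of_nat n * of_real (1 - p')" for n
  proof (induction n)
    case 0 then show ?case using H0 by simp
  next
    case (Suc n)
    have "H (of_nat (Suc n) * of_real (1 - p)) = H (of_nat n * of_real (1 - p) + of_real (1 - p))"
      by (simp add: algebra_simps)
    also have "\<dots> = of_nat n * of_real (1 - p') + of_real (1 - p')" using shift Suc by simp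
    finally show ?case by (simp add: algebra_simps)
  qed
  have Hk: "H (of_real p ^ k * w) = of_real p' ^ k * H w" for k w
  proof (induction k)
    case 0 then show ?case by simp
  next
    case (Suc k)
    have "H (of_real p ^ Suc k * w) = H (of_real p * (of_real p ^ k * w))" by (simp add: algebra_simps)
    also have "\<dots> = of_real p' * (of_real p' ^ k * H w)" using h1 Suc by simp
    finally show ?case by (simp add: algebra_simps)
  qed
  have "compact (H ` cball 0 1)"
    by (rule compact_continuous_image) (use cH continuous_on_subset in auto)
  then obtain M where M: "\<And>z. z \<in> cball 0 1 \<Longrightarrow> norm (H z) \<le> M"
    using compact_imp_bounded bounded_iff by (metis image_eqI)
  define r where "r = p' / p"
  have r1: "1 < r" using lt p unfolding r_def by simp
  obtain k where k: "M / (1 - p') + 1 < r ^ k" using real_arch_pow[OF r1] by blast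
  define n where "n = nat \<lfloor>1 / p ^ k\<rfloor>"
  have pk: "0 < p ^ k" using p by simp
  have fl: "0 \<le> \<lfloor>1 / p ^ k\<rfloor>" using pk by simp
  have rn: "real n = real_of_int \<lfloor>1 / p ^ k\<rfloor>" unfolding n_def using fl by simp
  have n1: "real n \<le> 1 / p ^ k" using rn of_int_floor_le[of "1 / p ^ k"] by linarith
  have n2: "1 / p ^ k - 1 < real n" using rn floor_correct[of "1 / p ^ k"] by linarith
  define z :: complex where "z = of_real (p ^ k * real n * (1 - p))"
  have zin: "z \<in> cball 0 1"
  proof -
    have "p ^ k * real n \<le> 1" using n1 pk by (simp add: field_simps)
    moreover have "0 \<le> p ^ k * real n" using pk by simp
    ultimately have "0 \<le> p ^ k * real n * (1 - p)" "p ^ k * real n * (1 - p) \<le> 1"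
      using p by (auto simp: mult_le_one)
    then show ?thesis unfolding z_def mem_cball_0 norm_of_real by (intro abs_leI) linarith+
  qed
  have "z = of_real p ^ k * (of_nat n * of_real (1 - p))" unfolding z_def by simp
  then have Hz: "H z = of_real (p' ^ k * real n * (1 - p'))" using Hk Hn by simp
  have "norm (H z) = p' ^ k * real n * (1 - p')" unfolding Hz norm_of_real by (rule abs_of_nonneg) (use p' in simp)
  also have "\<dots> > p' ^ k * (1 / p ^ k - 1) * (1 - p')"
    using n2 p' by (intro mult_strict_right_mono mult_strict_left_mono) auto
  also have "p' ^ k * (1 / p ^ k - 1) = r ^ k - p' ^ k" unfolding r_def by (simp add: power_divide field_simps)
  finally have "(r ^ k - p' ^ k) * (1 - p') < norm (H z)" .
  moreover have "p' ^ k \<le> 1" using p' by (simp add: power_le_one)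
  moreover have "M < (r ^ k - 1) * (1 - p')" using k p' by (simp add: field_simps)
  moreover have "(r ^ k - 1) * (1 - p') \<le> (r ^ k - p' ^ k) * (1 - p')"
    by (rule mult_right_mono) (use \<open>p' ^ k \<le> 1\<close> p' in auto)
  ultimately have "M < norm (H z)" by linarith
  with M[OF zin] show False by simp
qed

lemma conj_inv:
  assumes "homeomorphism UNIV UNIV F G" "\<And>z. F (S z) = S' (F z)"
  shows "G (S' w) = S (G w)"
proof -
  have GF: "\<And>z. G (F z) = z" and FG: "\<And>w. F (G w) = w" using assms(1) by (auto simp: homeomorphism_def)
  have "G (S' w) = G (S' (F (G w)))" using FG by simp
  also have "\<dots> = G (F (S (G w)))" using assms(2) by simp
  finally show ?thesis using GF by simp
qed

lemma IFS_cx: "IFSmap p q i (z::complex) = (if i = 1 then of_real p*z else if i = 2 then of_real q*z else if i = 3 then of_real p*z + of_real (1-p) else of_real q*z+ of_real (1-q))"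
  by (simp add: IFSmap_def)

lemma part2:
  fixes F G :: "complex \<Rightarrow> complex"
  assumes "0 < p" "p < 1/2" "0 < q" "q < 1/2"
      and "0 < p'" "p' < 1/2" "0 < q'" "q' < 1/2"
      and h: "homeomorphism UNIV UNIV F G"
      and c: "\<forall>z. \<forall>i\<in>{1..4::nat}. F (IFSmap p q i z) = IFSmap p' q' i (F z)"
  shows "p = p' \<and> q = q'"
proof -
  have cF: "continuous_on UNIV F" and cG: "continuous_on UNIV G" using h by (auto simp: homeomorphism_def)
  have c': "\<And>z. F (IFSmap p q i z) = IFSmap p' q' i (F z)" if "i \<in> {1..4}" for i using c that by blast
  have d: "\<And>w. G (IFSmap p' q' i w) = IFSmap p q i (G w)" if "i \<in> {1..4}" for i
    by (rule conj_inv[of F G "IFSmap p q i" "IFSmap p' q' i", OF h c'[OF that]])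
  have f1: "F (of_real p * z) = of_real p' * F z" for z using c'[of 1] by (simp add: IFS_cx)
  have f2: "F (of_real q * z) = of_real q' * F z" for z using c'[of 2] by (simp add: IFS_cx)
  have f3: "F (of_real p * z + of_real (1-p)) = of_real p' * F z + of_real (1-p')" for z using c'[of 3] by (simp add: IFS_cx)
  have f4: "F (of_real q * z + of_real (1-q)) = of_real q' * F z + of_real (1-q')" for z using c'[of 4] by (simp add: IFS_cx)
  have g1: "G (of_real p' * z) = of_real p * G z" for z using d[of 1] by (simp add: IFS_cx)
  have g2: "G (of_real q' * z) = of_real q * G z" for z using d[of 2] by (simp add: IFS_cx)
  have g3: "G (of_real p' * z + of_real (1-p')) = of_real p * G z + of_real (1-p)" for z using d[of 3] by (simp add: IFS_cx)
  have g4: "G (of_real q' * z + of_real (1-q')) = of_real q * G z + of_real (1-q)" for z using d[of 4] by (simp add: IFS_cx)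
  have "p' \<le> p" using assms(1-8) by (intro scale_le[of "p" "p'" F, OF _ _ _ _ cF f1 f3]) auto
  moreover have "p \<le> p'" using assms(1-8) by (intro scale_le[of "p'" "p" G, OF _ _ _ _ cG g1 g3]) auto
  moreover have "q' \<le> q" using assms(1-8) by (intro scale_le[of "q" "q'" F, OF _ _ _ _ cF f2 f4]) auto
  moreover have "q \<le> q'" using assms(1-8) by (intro scale_le[of "q'" "q" G, OF _ _ _ _ cG g2 g4]) auto
  ultimately show ?thesis by simp
qed

lemma part1:
  fixes f g :: "real \<Rightarrow> real"
  assumes K: "closed K" and K': "closed K'" and h: "homeomorphism K K' f g"
  shows "\<exists>F G :: complex \<Rightarrow> complex. homeomorphism UNIV UNIV F G \<and>
            (\<forall>x\<in>K. F (complex_of_real x) = complex_of_real (f x))"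
proof -
  have cf: "continuous_on K f" and cg: "continuous_on K' g" and gf: "\<And>x. x \<in> K \<Longrightarrow> g (f x) = x"
    and fK: "\<And>x. x \<in> K \<Longrightarrow> f x \<in> K'"
    using h by (auto simp: homeomorphism_def)
  obtain a where ca: "continuous_on UNIV a" and a: "\<And>x. x \<in> K \<Longrightarrow> a x = f x"
    using Tietze_unbounded[OF cf, of UNIV] K by auto
  obtain b where cb: "continuous_on UNIV b" and b: "\<And>x. x \<in> K' \<Longrightarrow> b x = g x"
    using Tietze_unbounded[OF cg, of UNIV] K' by auto
  define F where "F z = of_real (Im z + a (Re z)) + \<i> * of_real (Re z - b (Im z + a (Re z)))" for z
  define G where "G w = of_real (Im w + b (Re w)) + \<i> * of_real (Re w - a (Im w + b (Re w)))" for w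
  have ReF: "Re (F z) = Im z + a (Re z)" and ImF: "Im (F z) = Re z - b (Im z + a (Re z))" for z
    unfolding F_def by simp_all
  have ReG: "Re (G z) = Im z + b (Re z)" and ImG: "Im (G z) = Re z - a (Im z + b (Re z))" for z
    unfolding G_def by simp_all
  have ca': "continuous_on UNIV (\<lambda>z. a (h z))" if "continuous_on UNIV h" for h :: "complex \<Rightarrow> real"
    using continuous_on_compose2[OF ca that] by auto
  have cb': "continuous_on UNIV (\<lambda>z. b (h z))" if "continuous_on UNIV h" for h :: "complex \<Rightarrow> real"
    using continuous_on_compose2[OF cb that] by auto
  have contF: "continuous_on UNIV F" unfolding F_def
    by (intro continuous_intros ca' cb')
  have contG: "continuous_on UNIV G" unfolding G_def
    by (intro continuous_intros ca' cb')
  have GF: "G (F z) = z" for z by (simp add: complex_eq_iff ReG ImG ReF ImF)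
  have FG: "F (G z) = z" for z by (simp add: complex_eq_iff ReG ImG ReF ImF)
  have hom: "homeomorphism UNIV UNIV F G"
    by (rule homeomorphismI) (use contF contG GF FG in auto)
  have "F (complex_of_real x) = complex_of_real (f x)" if "x \<in> K" for x
    using that by (simp add: complex_eq_iff ReF ImF a b fK gf)
  with hom show ?thesis by blast
qed

theorem theorem12:
  fixes p q p' q' :: real and f :: "real \<Rightarrow> real"
  assumes "0 < p" "p < 1/2" "0 < q" "q < 1/2"
      and "0 < p'" "p' < 1/2" "0 < q'" "q' < 1/2"
      and "twofold_Cantor p q" and "twofold_Cantor p' q'"
      and "\<exists>g. homeomorphism (attractor p q) (attractor p' q') f g"
      and "\<forall>x\<in>attractor p q. \<forall>i\<in>{1..4::nat}.
             f (IFSmap p q i x) = IFSmap p' q' i (f x)"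
  shows "(\<exists>F G :: complex \<Rightarrow> complex. homeomorphism UNIV UNIV F G \<and>
            (\<forall>x\<in>attractor p q. F (complex_of_real x) = complex_of_real (f x)))
       \<and> ((\<exists>F G :: complex \<Rightarrow> complex. homeomorphism UNIV UNIV F G \<and>
            (\<forall>x\<in>attractor p q. F (complex_of_real x) = complex_of_real (f x)) \<and>
            (\<forall>z. \<forall>i\<in>{1..4::nat}. F (IFSmap p q i z) = IFSmap p' q' i (F z)))
          \<longrightarrow> p = p' \<and> q = q')"
proof (rule conjI[OF _ impI])
  obtain g where g: "homeomorphism (attractor p q) (attractor p' q') f g" using assms(11) by blast
  show "\<exists>F G :: complex \<Rightarrow> complex. homeomorphism UNIV UNIV F G \<and>
            (\<forall>x\<in>attractor p q. F (complex_of_real x) = complex_of_real (f x))"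
    by (rule part1[OF attractor_closed attractor_closed g]) (use assms in auto)
next
  assume "\<exists>F G :: complex \<Rightarrow> complex. homeomorphism UNIV UNIV F G \<and>
            (\<forall>x\<in>attractor p q. F (complex_of_real x) = complex_of_real (f x)) \<and>
            (\<forall>z. \<forall>i\<in>{1..4::nat}. F (IFSmap p q i z) = IFSmap p' q' i (F z))"
  then obtain F G :: "complex \<Rightarrow> complex" where "homeomorphism UNIV UNIV F G"
    "\<forall>z. \<forall>i\<in>{1..4::nat}. F (IFSmap p q i z) = IFSmap p' q' i (F z)" by blast
  then show "p = p' \<and> q = q'" using part2 assms by blast
qed

end
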